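(* A formal power series $\varphi(x)\in\mathbb{C}[[x]]$ is symplectic if and only if $\varphi(x)=\varphi\big(x/(x-1)\big)$ as formal power series. Moreover, if $\varphi(x)$ is a rational function regular at $x=0$ (identified with its Taylor series at $0$), then the following are equivalent: (1) $\varphi(x)$ is symplectic; (2) there exists a rational function $\rho(y)$ such that $\varphi(x)=\rho\big(x^2/(1-x)\big)$; (3) $\varphi(x)=\varphi\big(x/(x-1)\big)$.
   Context: A formal power series $\varphi(x)=\sum_{i\ge0}\gamma_i x^i\in\mathbb{C}[[x]]$ is called symplectic if for every $m\ge1$ one has $\sum_{k=0}^{m-1}(-1)^k\binom{m-1}{k}\gamma_{m+k}=0$. The substitution $x\mapsto x/(x-1)=-\sum_{j\ge1}x^j$ is a formal composition with a series having zero constant term. *)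

theory Defs
  imports "HOL-Computational_Algebra.Computational_Algebra"
begin

definition symplectic :: "complex fps \<Rightarrow> bool" where
  "symplectic \<phi> \<longleftrightarrow>
     (\<forall>m::nat. m \<ge> 1 \<longrightarrow>
        (\<Sum>k=0..m-1. (-1)^k * of_nat ((m-1) choose k) * fps_nth \<phi> (m+k)) = 0)"

definition sympl_subst :: "complex fps" where
  "sympl_subst = fps_X / (fps_X - 1)"

text \<open>Rational functions over C are elements of the fraction field of C[x].
  A rational polynomial is lifted coefficientwise into this field.\<close>
definition const_ratfun :: "complex \<Rightarrow> complex poly fract" where
  "const_ratfun c = to_fract [:c:]"

definition poly_at_ratfun :: "complex poly \<Rightarrow> complex poly fract \<Rightarrow> complex poly fract" where
  "poly_at_ratfun a u = poly (map_poly const_ratfun a) u"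

definition sympl_y :: "complex poly fract" where
  "sympl_y = Fract [:0, 0, 1:] [:1, -1:]"

text \<open>Taylor series at 0 of the rational function p/q, where q(0) \<noteq> 0.\<close>
definition taylor_ratfun :: "complex poly \<Rightarrow> complex poly \<Rightarrow> complex fps" where
  "taylor_ratfun p q = fps_of_poly p / fps_of_poly q"

end

theory Submission
  imports Defs
begin


lemma s_eq: "sympl_subst = fps_X * inverse (fps_X - 1 :: complex fps)"
  unfolding sympl_subst_def by (simp add: fps_divide_unit)

lemma s0 [simp]: "sympl_subst $ 0 = 0"
  by (simp add: s_eq)

lemma s_mult: "sympl_subst * (1 - fps_X) = - fps_X"
proof -
  have h: "inverse (fps_X - 1 :: complex fps) * (fps_X - 1) = 1"
    by (rule inverse_mult_eq_1) simp
  have "sympl_subst * (1 - fps_X) = - (fps_X * (inverse (fps_X - 1 :: complex fps) * (fps_X - 1)))"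
    by (simp add: s_eq algebra_simps)
  also have "\<dots> = - fps_X" by (simp add: h)
  finally show ?thesis .
qed

lemma one_minus_X_pow_nth:
  "((1 - fps_X :: complex fps) ^ k) $ j = (-1)^j * of_nat (k choose j)"
proof (induction k arbitrary: j)
  case 0
  then show ?case by (cases j) auto
next
  case (Suc k)
  have e: "(1 - fps_X :: complex fps) ^ Suc k = (1 - fps_X) ^ k - fps_X * (1 - fps_X) ^ k"
    by (simp add: algebra_simps)
  show ?case
  proof (cases j)
    case 0
    then show ?thesis using Suc by (simp add: e)
  next
    case (Suc i)
    show ?thesis unfolding e using Suc.IH \<open>j = Suc i\<close>
      by (simp add: algebra_simps)
  qed
qed

lemma omx_nth_big: "j > k \<Longrightarrow> ((1 - fps_X :: complex fps) ^ k) $ j = 0"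
  by (simp add: one_minus_X_pow_nth)

lemma omx_nth0 [simp]: "((1 - fps_X :: complex fps) ^ k) $ 0 = 1"
  by (simp add: one_minus_X_pow_nth)

lemma A1: "(F * (1 - fps_X :: complex fps) ^ Suc k) $ j =
   (F * (1 - fps_X) ^ k) $ j - (if j = 0 then 0 else (F * (1 - fps_X) ^ k) $ (j - 1))"
proof -
  have "F * (1 - fps_X :: complex fps) ^ Suc k = F * (1 - fps_X) ^ k - fps_X * (F * (1 - fps_X) ^ k)"
    by (simp add: algebra_simps)
  then show ?thesis by simp
qed

lemma A5: "(sympl_subst * F) $ Suc n = (sympl_subst * F) $ n - F $ n"
proof -
  have "(sympl_subst * F) - fps_X * (sympl_subst * F) = - fps_X * F"
  proof -
    have "(sympl_subst * F) - fps_X * (sympl_subst * F) = (sympl_subst * (1 - fps_X)) * F"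
      by (simp add: algebra_simps)
    then show ?thesis by (simp add: s_mult)
  qed
  then have "((sympl_subst * F) - fps_X * (sympl_subst * F)) $ Suc n = (- fps_X * F) $ Suc n"
    by simp
  then have "(sympl_subst * F) $ Suc n - (sympl_subst * F) $ n = - (F $ n)" by simp
  then show ?thesis by (simp add: diff_eq_eq)
qed

lemma A5sum: "(sympl_subst * F) $ n = - (\<Sum>k<n. F $ k)"
proof (induction n)
  case 0
  then show ?case by (simp add: fps_mult_nth)
next
  case (Suc n)
  then show ?case by (simp add: A5)
qed

lemma decomp: "g = fps_const (g $ 0) + fps_X * fps_shift 1 (g :: complex fps)"
  by (rule fps_ext) (simp)

lemma comp_decomp: "g oo sympl_subst = fps_const (g $ 0) + sympl_subst * (fps_shift 1 g oo sympl_subst)"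
proof -
  have "g oo sympl_subst = (fps_const (g $ 0) + fps_X * fps_shift 1 g) oo sympl_subst"
    by (subst decomp) simp
  also have "\<dots> = fps_const (g $ 0) + sympl_subst * (fps_shift 1 g oo sympl_subst)"
    by (simp add: fps_compose_add_distrib fps_compose_mult_distrib)
  finally show ?thesis .
qed

lemma A3: "n \<ge> 1 \<Longrightarrow> (g * (1 - fps_X :: complex fps) ^ (n - 1)) $ n
   = (fps_shift 1 g * (1 - fps_X) ^ (n - 1)) $ (n - 1)"
proof -
  assume n: "n \<ge> 1"
  have "g * (1 - fps_X :: complex fps) ^ (n - 1) =
     fps_const (g $ 0) * (1 - fps_X) ^ (n - 1) + fps_X * (fps_shift 1 g * (1 - fps_X) ^ (n - 1))"
    by (subst decomp) (simp add: algebra_simps)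
  then show ?thesis using n by (simp add: omx_nth_big)
qed

lemma A4: "k \<ge> 1 \<Longrightarrow> (h * (1 - fps_X :: complex fps) ^ (k - 1)) $ k
   = (h * (1 - fps_X) ^ k) $ k + (h * (1 - fps_X) ^ (k - 1)) $ (k - 1)"
proof -
  assume k: "k \<ge> 1"
  then obtain i where i: "k = Suc i" by (cases k) auto
  show ?thesis unfolding i using A1[of h i "Suc i"] by simp
qed

lemma Tsum:
  assumes IH: "\<And>k. 1 \<le> k \<Longrightarrow> k < N \<Longrightarrow>
      (h oo sympl_subst) $ k = (-1)^k * (h * (1 - fps_X) ^ (k - 1)) $ k"
  shows "1 \<le> n \<Longrightarrow> n \<le> N \<Longrightarrow>
     (\<Sum>k<n. (h oo sympl_subst) $ k) = (-1)^(n - 1) * (h * (1 - fps_X) ^ (n - 1)) $ (n - 1)"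
proof (induction n)
  case 0
  then show ?case by simp
next
  case (Suc n)
  show ?case
  proof (cases "n = 0")
    case True
    then show ?thesis by simp
  next
    case False
    then have n1: "1 \<le> n" by simp
    have "(\<Sum>k<Suc n. (h oo sympl_subst) $ k) = (\<Sum>k<n. (h oo sympl_subst) $ k) + (h oo sympl_subst) $ n"
      by simp
    also have "\<dots> = (-1)^(n - 1) * (h * (1 - fps_X) ^ (n - 1)) $ (n - 1)
        + (-1)^n * ((h * (1 - fps_X) ^ n) $ n + (h * (1 - fps_X) ^ (n - 1)) $ (n - 1))"
      using Suc n1 IH[of n] A4[OF n1, of h] by simp
    also have "\<dots> = (-1)^n * (h * (1 - fps_X) ^ n) $ n"
      using n1 by (cases n) (auto simp: algebra_simps)
    finally show ?thesis by simp
  qed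
qed

lemma K: "n \<ge> 1 \<Longrightarrow> (g oo sympl_subst) $ n = (-1)^n * (g * (1 - fps_X) ^ (n - 1)) $ n"
proof (induction n arbitrary: g rule: less_induct)
  case (less n)
  let ?h = "fps_shift 1 g"
  have "(g oo sympl_subst) $ n = (sympl_subst * (?h oo sympl_subst)) $ n"
    using less.prems by (subst comp_decomp) simp
  also have "\<dots> = - (\<Sum>k<n. (?h oo sympl_subst) $ k)" by (rule A5sum)
  also have "(\<Sum>k<n. (?h oo sympl_subst) $ k) = (-1)^(n - 1) * (?h * (1 - fps_X) ^ (n - 1)) $ (n - 1)"
    by (rule Tsum[of n]) (use less in auto)
  also have "(?h * (1 - fps_X) ^ (n - 1)) $ (n - 1) = (g * (1 - fps_X) ^ (n - 1)) $ n"
    using A3[OF less.prems] by simp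
  finally show ?case using less.prems by (cases n) auto
qed


lemma symp_L_term: "(\<phi> * (1 - fps_X :: complex fps) ^ j) $ (Suc j + j) =
   (-1)^j * (\<Sum>k=0..j. (-1)^k * of_nat (j choose k) * fps_nth \<phi> (Suc j + k))"
proof -
  have "(\<phi> * (1 - fps_X :: complex fps) ^ j) $ (Suc j + j) = (((1 - fps_X) ^ j) * \<phi>) $ (Suc j + j)"
    by (simp add: mult.commute)
  also have "\<dots> = (\<Sum>i=0..Suc j + j. ((1 - fps_X :: complex fps) ^ j) $ i * \<phi> $ (Suc j + j - i))"
    by (rule fps_mult_nth)
  also have "\<dots> = (\<Sum>i=0..j. ((1 - fps_X :: complex fps) ^ j) $ i * \<phi> $ (Suc j + j - i))"
    by (rule sum.mono_neutral_cong_right) (auto simp: omx_nth_big)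
  also have "\<dots> = (\<Sum>i=0..j. ((1 - fps_X :: complex fps) ^ j) $ (j - i) * \<phi> $ (Suc j + i))"
    by (subst sum.atLeastAtMost_rev) (auto intro!: sum.cong simp: Suc_diff_le)
  also have "\<dots> = (\<Sum>i=0..j. (-1)^j * ((-1)^i * of_nat (j choose i) * \<phi> $ (Suc j + i)))"
  proof (rule sum.cong)
    fix i assume "i \<in> {0..j}"
    then have ij: "i \<le> j" by simp
    have "(-1::complex)^(j - i) = (-1)^j * (-1)^i"
    proof -
      have "(-1::complex)^j = (-1)^(j-i) * (-1)^i" using ij by (simp flip: power_add)
      then have "(-1::complex)^j * (-1)^i = (-1)^(j-i) * ((-1)^i * (-1)^i)" by simp
      also have "(-1::complex)^i * (-1)^i = 1" by (simp flip: power_add add: power_mult_distrib[symmetric] )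
      finally show ?thesis by simp
    qed
    then show "((1 - fps_X :: complex fps) ^ j) $ (j - i) * \<phi> $ (Suc j + i) =
        (-1)^j * ((-1)^i * of_nat (j choose i) * \<phi> $ (Suc j + i))"
      using ij by (simp add: one_minus_X_pow_nth binomial_symmetric[OF ij, symmetric])
  qed simp
  finally show ?thesis by (simp add: sum_distrib_left)
qed

definition LL :: "nat \<Rightarrow> complex fps \<Rightarrow> complex" where
  "LL j \<psi> = (\<psi> * (1 - fps_X) ^ j) $ (Suc j + j)"

lemma symplectic_LL: "symplectic \<phi> \<longleftrightarrow> (\<forall>j. LL j \<phi> = 0)"
proof -
  have "symplectic \<phi> \<longleftrightarrow> (\<forall>j. (\<Sum>k=0..j. (-1)^k * of_nat (j choose k) * fps_nth \<phi> (Suc j + k)) = (0::complex))"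
    unfolding symplectic_def
  proof (intro iffI allI impI)
    fix j assume H: "\<forall>m::nat. m \<ge> 1 \<longrightarrow> (\<Sum>k=0..m-1. (-1)^k * of_nat ((m-1) choose k) * fps_nth \<phi> (m+k)) = (0::complex)"
    show "(\<Sum>k=0..j. (-1)^k * of_nat (j choose k) * fps_nth \<phi> (Suc j + k)) = (0::complex)"
      using H[rule_format, of "Suc j"] by simp
  next
    fix m :: nat assume m: "m \<ge> 1" and H: "\<forall>j. (\<Sum>k=0..j. (-1)^k * of_nat (j choose k) * fps_nth \<phi> (Suc j + k)) = (0::complex)"
    from m obtain j where mj: "m = Suc j" by (cases m) auto
    show "(\<Sum>k=0..m-1. (-1)^k * of_nat ((m-1) choose k) * fps_nth \<phi> (m+k)) = (0::complex)"
      using H[rule_format, of j] mj by simp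
  qed
  also have "\<dots> \<longleftrightarrow> (\<forall>j. LL j \<phi> = 0)"
  proof -
    have "LL j \<phi> = (-1)^j * (\<Sum>k=0..j. (-1)^k * of_nat (j choose k) * fps_nth \<phi> (Suc j + k))" for j
      unfolding LL_def by (rule symp_L_term)
    then show ?thesis by simp
  qed
  finally show ?thesis .
qed

lemma ss: "sympl_subst oo sympl_subst = fps_X"
proof -
  have sX: "sympl_subst * (fps_X - 1) = fps_X" using s_mult
    by (metis minus_diff_eq mult_minus_right neg_equal_iff_equal)
  have "(sympl_subst * (fps_X - 1)) oo sympl_subst = fps_X oo sympl_subst" by (simp add: sX)
  then have A: "(sympl_subst oo sympl_subst) * (sympl_subst - 1) = sympl_subst"
    by (simp add: fps_compose_mult_distrib fps_compose_sub_distrib)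
  have B: "fps_X * (sympl_subst - 1) = sympl_subst"
    using s_mult by (simp add: algebra_simps)
  have "((sympl_subst oo sympl_subst) - fps_X) * (sympl_subst - 1) = 0"
    by (simp only: left_diff_distrib A B) simp
  moreover have "sympl_subst - 1 \<noteq> 0"
  proof
    assume "sympl_subst - 1 = 0"
    then have "(sympl_subst - 1) $ 0 = 0" by simp
    then show False by simp
  qed
  ultimately show ?thesis by simp
qed

lemma omx_s: "(1 - fps_X) * (1 - sympl_subst) = 1"
proof -
  have "(1 - fps_X) * (1 - sympl_subst) = 1 - fps_X - sympl_subst * (1 - fps_X)"
    by (simp add: algebra_simps)
  then show ?thesis by (simp add: s_mult)
qed

lemma inv_omx_comp: "inverse (1 - fps_X :: complex fps) oo sympl_subst = 1 - fps_X"
proof -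
  have "inverse (1 - fps_X :: complex fps) oo sympl_subst = inverse ((1 - fps_X) oo sympl_subst)"
    by (rule fps_inverse_compose) auto
  also have "(1 - fps_X) oo sympl_subst = 1 - sympl_subst"
    by (simp add: fps_compose_sub_distrib)
  also have "inverse (1 - sympl_subst) = 1 - fps_X"
    by (rule fps_inverse_unique) (use omx_s in \<open>simp add: mult.commute\<close>)
  finally show ?thesis .
qed

lemma LL_neg: "LL j (\<phi> oo sympl_subst) = - LL j \<phi>"
proof -
  define g where "g = \<phi> * inverse (1 - fps_X :: complex fps) ^ j"
  have ginv: "inverse (1 - fps_X :: complex fps) * (1 - fps_X) = 1"
    by (rule inverse_mult_eq_1) simp
  have "g oo sympl_subst = (\<phi> oo sympl_subst) * (1 - fps_X) ^ j"
    by (simp add: g_def fps_compose_mult_distrib fps_compose_power[symmetric] inv_omx_comp)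
  moreover have "g * (1 - fps_X) ^ (Suc (j + j) - 1) = \<phi> * (1 - fps_X) ^ j"
  proof -
    have "g * (1 - fps_X) ^ (Suc (j + j) - 1) = \<phi> * (inverse (1 - fps_X) ^ j * (1 - fps_X) ^ j) * (1 - fps_X) ^ j"
      by (simp add: g_def power_add mult.assoc)
    moreover have "inverse (1 - fps_X :: complex fps) ^ j * (1 - fps_X) ^ j = 1"
      by (simp add: power_mult_distrib[symmetric] ginv)
    ultimately show ?thesis by simp
  qed
  moreover have "(g oo sympl_subst) $ Suc (j + j) = (-1)^Suc (j+j) * (g * (1 - fps_X) ^ (Suc (j + j) - 1)) $ Suc (j + j)"
    by (rule K) simp
  ultimately show ?thesis unfolding LL_def by simp
qed

lemma Zlem: "(\<forall>i<n. \<psi> $ i = 0) \<Longrightarrow> (\<psi> * (1 - fps_X :: complex fps) ^ k) $ n = \<psi> $ n"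
proof -
  assume z: "\<forall>i<n. \<psi> $ i = 0"
  have "(\<psi> * (1 - fps_X :: complex fps) ^ k) $ n = (\<Sum>i\<in>insert n {0..<n}. \<psi> $ i * ((1 - fps_X) ^ k) $ (n - i))"
    by (simp add: fps_mult_nth atLeastLessThanSuc_atLeastAtMost[symmetric] del: insert_iff)
  also have "\<dots> = \<psi> $ n" using z by simp
  finally show ?thesis .
qed

theorem part1: "symplectic \<phi> \<longleftrightarrow> \<phi> = fps_compose \<phi> sympl_subst"
proof
  assume "\<phi> = \<phi> oo sympl_subst"
  then have "LL j \<phi> = 0" for j using LL_neg[of j \<phi>] by simp
  then show "symplectic \<phi>" by (simp add: symplectic_LL)
next
  assume sy: "symplectic \<phi>"
  define \<psi> where "\<psi> = \<phi> - (\<phi> oo sympl_subst)"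
  have "\<psi> oo sympl_subst = (\<phi> oo sympl_subst) - (\<phi> oo (sympl_subst oo sympl_subst))"
    by (simp add: \<psi>_def fps_compose_sub_distrib fps_compose_assoc)
  then have psis: "\<psi> oo sympl_subst = - \<psi>" by (simp add: ss \<psi>_def)
  have L0: "LL j \<psi> = 0" for j
  proof -
    have "LL j \<psi> = LL j \<phi> - LL j (\<phi> oo sympl_subst)"
      by (simp add: LL_def \<psi>_def algebra_simps)
    then show ?thesis using sy LL_neg[of j \<phi>] by (simp add: symplectic_LL)
  qed
  have "\<psi> $ n = 0" for n
  proof (induction n rule: less_induct)
    case (less n)
    show ?case
    proof (cases "n = 0")
      case True
      then show ?thesis by (simp add: \<psi>_def)
    next
      case False
      show ?thesis
      proof (cases "even n")
        case True
        have "(\<psi> oo sympl_subst) $ n = (-1)^n * (\<psi> * (1 - fps_X) ^ (n - 1)) $ n"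
          by (rule K) (use False in simp)
        also have "\<dots> = \<psi> $ n" using True less by (simp add: Zlem)
        finally have "- \<psi> $ n = \<psi> $ n" by (simp add: psis)
        then show ?thesis by simp
      next
        case odd: False
        from odd obtain j where "n = 2 * j + 1" by (auto elim: oddE)
        then have j: "n = Suc (j + j)" by simp
        have "LL j \<psi> = \<psi> $ n" unfolding LL_def using less j by (simp add: Zlem)
        then show ?thesis using L0 by simp
      qed
    qed
  qed
  then have "\<psi> = 0" by (simp add: fps_eq_iff)
  then show "\<phi> = \<phi> oo sympl_subst" by (simp add: \<psi>_def)
qed



abbreviation W :: "complex poly" where "W \<equiv> [:1, -1:]"

lemma fW: "fps_of_poly W = 1 - fps_X"
  by (simp add: fps_of_poly_pCons fps_of_poly_const)

lemma fW_pow: "fps_of_poly (W ^ k) = (1 - fps_X) ^ k"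
  by (simp add: fps_of_poly_power fW)

lemma fW_pow_comp: "fps_of_poly (W ^ k) oo sympl_subst = (1 - sympl_subst) ^ k"
  by (simp add: fW_pow fps_compose_power[symmetric] fps_compose_sub_distrib)

lemma omx_s_pow: "(1 - fps_X) ^ k * (1 - sympl_subst) ^ k = 1"
  by (simp add: power_mult_distrib[symmetric] omx_s)

lemma to_fract_power: "to_fract (p ^ k) = to_fract p ^ k"
  by (induction k) simp_all

lemma to_fract_W_nz: "to_fract W \<noteq> 0"
  by simp

lemma poly_at_pCons: "poly_at_ratfun (pCons a c) u = to_fract [:a:] + u * poly_at_ratfun c u"
proof -
  have "const_ratfun 0 = 0" by (simp add: const_ratfun_def)
  then show ?thesis
    unfolding poly_at_ratfun_def by (simp add: map_poly_pCons const_ratfun_def)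
qed

lemma poly_at_0 [simp]: "poly_at_ratfun 0 u = 0"
  unfolding poly_at_ratfun_def by simp

lemma y_eq: "sympl_y = to_fract [:0, 0, 1:] / to_fract W"
  unfolding sympl_y_def by (simp add: Fract_conv_to_fract)

lemma fract_step:
  "to_fract [:a:] * to_fract W ^ Suc m + to_fract [:0, 0, 1:] * (to_fract W ^ m * P)
   = to_fract W ^ Suc m * (to_fract [:a:] + sympl_y * P)"
  using to_fract_W_nz unfolding y_eq
  by (simp add: field_simps del: to_fract_eq_0_iff)

lemma X2: "fps_of_poly [:0, 0, 1 :: complex:] = fps_X ^ 2"
  by (simp add: fps_of_poly_pCons power2_eq_square)

lemma inv_step_W:
  "(1 - fps_X) ^ (2 * Suc m) * ((1 - sympl_subst) ^ Suc m) = (1 - fps_X :: complex fps) ^ Suc m"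
proof -
  have e: "(1 - fps_X :: complex fps) ^ (2 * Suc m) = (1 - fps_X) ^ Suc m * (1 - fps_X) ^ Suc m"
    by (simp only: mult_2 power_add)
  show ?thesis by (simp only: e mult.assoc omx_s_pow mult_1_right)
qed

lemma inv_step_X2:
  "(1 - fps_X) ^ (2 * Suc m) * (sympl_subst ^ 2 * F) = fps_X ^ 2 * ((1 - fps_X :: complex fps) ^ (2 * m) * F)"
proof -
  have e: "(1 - fps_X :: complex fps) ^ (2 * Suc m) = (1 - fps_X) ^ 2 * (1 - fps_X) ^ (2 * m)"
    by (simp only: mult_Suc_right power_add)
  have f: "sympl_subst ^ 2 * (1 - fps_X) ^ 2 = fps_X ^ 2"
    by (simp add: power_mult_distrib[symmetric] s_mult)
  have "(1 - fps_X) ^ (2 * Suc m) * (sympl_subst ^ 2 * F) = (sympl_subst ^ 2 * (1 - fps_X) ^ 2) * ((1 - fps_X :: complex fps) ^ (2 * m) * F)"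
    unfolding e by (simp only: mult_ac)
  then show ?thesis by (simp only: f)
qed

lemma conv:
  "degree c \<le> n \<Longrightarrow> \<exists>H. to_fract H = to_fract (W ^ n) * poly_at_ratfun c sympl_y
     \<and> (H = 0 \<longrightarrow> c = 0)
     \<and> (1 - fps_X) ^ (2 * n) * (fps_of_poly H oo sympl_subst) = fps_of_poly H"
proof (induction n arbitrary: c)
  case 0
  then have c: "c = [:coeff c 0:]" using degree_0_id[of c] by simp
  show ?case
  proof (intro exI[of _ c] conjI)
    show "to_fract c = to_fract (W ^ 0) * poly_at_ratfun c sympl_y"
      by (subst (2) c, subst poly_at_pCons) (simp flip: c)
    show "(1 - fps_X) ^ (2 * 0) * (fps_of_poly c oo sympl_subst) = fps_of_poly c"
      by (subst (1 2) c) (simp add: fps_of_poly_const)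
  qed simp
next
  case (Suc m)
  obtain a c' where c: "c = pCons a c'" by (cases c)
  have dc': "degree c' \<le> m" using Suc.prems c
    by (cases "c' = 0") (auto simp: degree_pCons_eq)
  obtain H' where H': "to_fract H' = to_fract (W ^ m) * poly_at_ratfun c' sympl_y"
     "H' = 0 \<longrightarrow> c' = 0"
     "(1 - fps_X) ^ (2 * m) * (fps_of_poly H' oo sympl_subst) = fps_of_poly H'"
    using Suc.IH[OF dc'] by blast
  define H where "H = [:a:] * W ^ Suc m + [:0, 0, 1:] * H'"
  show ?case
  proof (intro exI[of _ H] conjI impI)
    show "to_fract H = to_fract (W ^ Suc m) * poly_at_ratfun c sympl_y"
      unfolding H_def c poly_at_pCons to_fract_add to_fract_mult to_fract_power H'(1)
      by (rule fract_step)
  next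
    assume "H = 0"
    then have "poly H 0 = 0" by simp
    then have a0: "a = 0" by (simp add: H_def)
    with \<open>H = 0\<close> have "[:0, 0, 1:] * H' = 0" by (simp add: H_def)
    then have "H' = 0" by simp
    with H'(2) a0 show "c = 0" by (simp add: c)
  next
    have fH: "fps_of_poly H = fps_const a * (1 - fps_X) ^ Suc m + fps_X ^ 2 * fps_of_poly H'"
      by (simp only: H_def fps_of_poly_add fps_of_poly_mult fps_of_poly_const fW_pow X2)
    have cH: "fps_of_poly H oo sympl_subst =
        fps_const a * (1 - sympl_subst) ^ Suc m + sympl_subst ^ 2 * (fps_of_poly H' oo sympl_subst)"
      unfolding fH
      by (simp add: fps_compose_add_distrib fps_compose_mult_distrib fps_compose_sub_distrib
           fps_compose_power[symmetric])
    have "(1 - fps_X) ^ (2 * Suc m) * (fps_of_poly H oo sympl_subst) =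
       fps_const a * ((1 - fps_X) ^ (2 * Suc m) * (1 - sympl_subst) ^ Suc m)
       + (1 - fps_X) ^ (2 * Suc m) * (sympl_subst ^ 2 * (fps_of_poly H' oo sympl_subst))"
      unfolding cH by (simp only: distrib_left mult.left_commute)
    also have "\<dots> = fps_of_poly H"
      unfolding inv_step_W inv_step_X2 H'(3) fH ..
    finally show "(1 - fps_X) ^ (2 * Suc m) * (fps_of_poly H oo sympl_subst) = fps_of_poly H" .
  qed
qed



lemma compose_pCons: "fps_of_poly (pCons a G) oo sympl_subst
   = fps_const a + (fps_of_poly G oo sympl_subst) * sympl_subst"
  by (simp add: fps_of_poly_pCons fps_compose_add_distrib fps_compose_mult_distrib)

lemma coeffW0 [simp]: "coeff (W ^ k) 0 = 1"
  by (simp flip: poly_0_coeff_0)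

lemma inv:
  "degree H \<le> 2 * n \<Longrightarrow> (1 - fps_X) ^ (2 * n) * (fps_of_poly H oo sympl_subst) = fps_of_poly H
   \<Longrightarrow> \<exists>c. to_fract H = to_fract (W ^ n) * poly_at_ratfun c sympl_y"
proof (induction n arbitrary: H)
  case 0
  then have c: "H = [:coeff H 0:]" using degree_0_id[of H] by simp
  show ?case
  proof (intro exI[of _ H])
    show "to_fract H = to_fract (W ^ 0) * poly_at_ratfun H sympl_y"
      by (subst (2) c, subst poly_at_pCons) (simp flip: c)
  qed
next
  case (Suc m)
  define a where "a = coeff H 0"
  define H1 where "H1 = H - [:a:] * W ^ Suc m"
  have fH1: "fps_of_poly H1 = fps_of_poly H - fps_const a * (1 - fps_X) ^ Suc m"
    by (simp only: H1_def fps_of_poly_diff fps_of_poly_mult fps_of_poly_const fW_pow)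
  have cH1: "fps_of_poly H1 oo sympl_subst = (fps_of_poly H oo sympl_subst) - fps_const a * (1 - sympl_subst) ^ Suc m"
    unfolding fH1
    by (simp add: fps_compose_mult_distrib fps_compose_sub_distrib fps_compose_power[symmetric])
  have inv1: "(1 - fps_X) ^ (2 * Suc m) * (fps_of_poly H1 oo sympl_subst) = fps_of_poly H1"
  proof -
    have "(1 - fps_X) ^ (2 * Suc m) * (fps_of_poly H1 oo sympl_subst) =
       (1 - fps_X) ^ (2 * Suc m) * (fps_of_poly H oo sympl_subst)
       - fps_const a * ((1 - fps_X) ^ (2 * Suc m) * (1 - sympl_subst) ^ Suc m)"
      unfolding cH1 by (simp only: right_diff_distrib mult.left_commute)
    also have "\<dots> = fps_of_poly H1"
      unfolding inv_step_W Suc.prems(2) fH1 ..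
    finally show ?thesis .
  qed
  have dH1: "degree H1 \<le> 2 * Suc m"
    unfolding H1_def
  proof (rule degree_diff_le[OF Suc.prems(1)])
    have "degree ([:a:] * W ^ Suc m) \<le> degree [:a:] + degree (W ^ Suc m)" by (rule degree_mult_le)
    also have "\<dots> \<le> 0 + degree W * Suc m" using degree_power_le[of W "Suc m"] by simp
    finally show "degree ([:a:] * W ^ Suc m) \<le> 2 * Suc m" by simp
  qed
  have "coeff H1 0 = 0"
  proof -
    have "poly H1 0 = 0" by (simp add: H1_def a_def poly_0_coeff_0)
    then show ?thesis by (simp add: poly_0_coeff_0)
  qed
  then obtain G where G: "H1 = pCons 0 G" by (cases H1) auto
  have XG: "fps_X * (- ((1 - fps_X) ^ Suc (2 * m) * (fps_of_poly G oo sympl_subst))) = fps_X * fps_of_poly G"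
  proof -
    have e: "(1 - fps_X :: complex fps) ^ (2 * Suc m) = (1 - fps_X) ^ Suc (2 * m) * (1 - fps_X)"
      by simp
    have "fps_X * fps_of_poly G = fps_of_poly H1" by (simp add: G fps_of_poly_pCons mult.commute)
    also have "\<dots> = (1 - fps_X) ^ (2 * Suc m) * (fps_of_poly H1 oo sympl_subst)" using inv1 by simp
    also have "\<dots> = (1 - fps_X) ^ Suc (2 * m) * (fps_of_poly G oo sympl_subst) * (sympl_subst * (1 - fps_X))"
      unfolding e G compose_pCons by (simp add: mult_ac)
    also have "\<dots> = fps_X * (- ((1 - fps_X) ^ Suc (2 * m) * (fps_of_poly G oo sympl_subst)))"
      by (simp add: s_mult)
    finally show ?thesis by simp
  qed
  then have invG: "- ((1 - fps_X) ^ Suc (2 * m) * (fps_of_poly G oo sympl_subst)) = fps_of_poly G"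
    by (simp only: mult_cancel_left) simp
  then have "(- ((1 - fps_X) ^ Suc (2 * m) * (fps_of_poly G oo sympl_subst))) $ 0 = fps_of_poly G $ 0"
    by simp
  then have "coeff G 0 = 0" by simp
  then obtain K where K: "G = pCons 0 K" by (cases G) auto
  have invK: "(1 - fps_X) ^ (2 * m) * (fps_of_poly K oo sympl_subst) = fps_of_poly K"
  proof -
    have "fps_X * fps_of_poly K = fps_of_poly G" by (simp add: K fps_of_poly_pCons mult.commute)
    also have "\<dots> = - ((1 - fps_X) ^ Suc (2 * m) * (fps_of_poly G oo sympl_subst))" using invG by simp
    also have "\<dots> = - ((1 - fps_X) ^ (2 * m) * (fps_of_poly K oo sympl_subst) * (sympl_subst * (1 - fps_X)))"
      unfolding K compose_pCons by (simp add: mult_ac)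
    also have "\<dots> = fps_X * ((1 - fps_X) ^ (2 * m) * (fps_of_poly K oo sympl_subst))"
      by (simp add: s_mult)
    finally show ?thesis by (simp only: mult_cancel_left) simp
  qed
  have dK: "degree K \<le> 2 * m"
  proof (cases "K = 0")
    case False
    then show ?thesis using dH1 by (simp add: G K degree_pCons_eq)
  qed simp
  obtain c' where c': "to_fract K = to_fract (W ^ m) * poly_at_ratfun c' sympl_y"
    using Suc.IH[OF dK invK] by blast
  have HK: "H = [:a:] * W ^ Suc m + [:0, 0, 1:] * K"
    using G K H1_def by (simp add: algebra_simps)
  show ?case
  proof (intro exI[of _ "pCons a c'"])
    show "to_fract H = to_fract (W ^ Suc m) * poly_at_ratfun (pCons a c') sympl_y"
      unfolding HK poly_at_pCons to_fract_add to_fract_mult to_fract_power c'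
      by (rule fract_step)
  qed
qed

lemma refl:
  "degree P \<le> n \<Longrightarrow> \<exists>R. degree R \<le> n \<and> fps_of_poly R = (1 - fps_X) ^ n * (fps_of_poly P oo sympl_subst)"
proof (induction n arbitrary: P)
  case 0
  then have c: "P = [:coeff P 0:]" using degree_0_id[of P] by simp
  show ?case
    by (intro exI[of _ P] conjI) (use 0 in simp, subst (1 2) c, simp add: fps_of_poly_const)
next
  case (Suc m)
  obtain a P' where P: "P = pCons a P'" by (cases P)
  have dP': "degree P' \<le> m" using Suc.prems P
    by (cases "P' = 0") (auto simp: degree_pCons_eq)
  obtain R' where R': "degree R' \<le> m" "fps_of_poly R' = (1 - fps_X) ^ m * (fps_of_poly P' oo sympl_subst)"
    using Suc.IH[OF dP'] by blast
  define R where "R = [:a:] * W ^ Suc m - pCons 0 R'"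
  show ?case
  proof (intro exI[of _ R] conjI)
    show "degree R \<le> Suc m"
      unfolding R_def
    proof (rule degree_diff_le)
      have "degree ([:a:] * W ^ Suc m) \<le> degree [:a:] + degree (W ^ Suc m)" by (rule degree_mult_le)
      also have "\<dots> \<le> 0 + degree W * Suc m" using degree_power_le[of W "Suc m"] by simp
      finally show "degree ([:a:] * W ^ Suc m) \<le> Suc m" by simp
      show "degree (pCons 0 R') \<le> Suc m" using degree_pCons_le[of 0 R'] R'(1) by simp
    qed
    have "(1 - fps_X) ^ Suc m * (fps_of_poly P oo sympl_subst)
        = fps_const a * (1 - fps_X) ^ Suc m + ((1 - fps_X) ^ m * (fps_of_poly P' oo sympl_subst)) * (sympl_subst * (1 - fps_X))"
      unfolding P compose_pCons by (simp add: algebra_simps)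
    also have "\<dots> = fps_of_poly R"
      unfolding R'(2)[symmetric] s_mult R_def
      by (simp add: fps_of_poly_diff fps_of_poly_mult fps_of_poly_const fW_pow fps_of_poly_pCons)
    finally show "fps_of_poly R = (1 - fps_X) ^ Suc m * (fps_of_poly P oo sympl_subst)" by simp
  qed
qed

lemma refl_inv:
  assumes "fps_of_poly R = (1 - fps_X) ^ n * (F oo sympl_subst)"
  shows "(1 - fps_X) ^ n * (fps_of_poly R oo sympl_subst) = F"
proof -
  have "fps_of_poly R oo sympl_subst = (1 - sympl_subst) ^ n * ((F oo sympl_subst) oo sympl_subst)"
    unfolding assms
    by (simp add: fps_compose_mult_distrib fps_compose_sub_distrib fps_compose_power[symmetric])
  also have "(F oo sympl_subst) oo sympl_subst = F"
    by (simp add: fps_compose_assoc[symmetric] ss)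
  finally show ?thesis by (simp add: mult.assoc[symmetric] omx_s_pow)
qed



lemma split2: "(1 - fps_X) ^ (2 * n) * ((F * G) oo sympl_subst)
   = ((1 - fps_X) ^ n * (F oo sympl_subst)) * ((1 - fps_X) ^ n * (G oo sympl_subst))"
proof -
  have e: "(1 - fps_X :: complex fps) ^ (2 * n) = (1 - fps_X) ^ n * (1 - fps_X) ^ n"
    by (simp only: mult_2 power_add)
  show ?thesis unfolding e by (simp only: fps_compose_mult_distrib[OF s0] mult_ac)
qed

theorem part2:
  assumes q0: "poly q 0 \<noteq> 0"
  shows "(taylor_ratfun p q = fps_compose (taylor_ratfun p q) sympl_subst) \<longleftrightarrow>
     (\<exists>a b :: complex poly. b \<noteq> 0 \<and>
               Fract p q = poly_at_ratfun a sympl_y / poly_at_ratfun b sympl_y)"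
proof -
  define \<phi> where "\<phi> = taylor_ratfun p q"
  have q0': "fps_of_poly q $ 0 \<noteq> 0" using q0 by (simp add: poly_0_coeff_0)
  have qnz: "q \<noteq> 0" using q0 by auto
  have fqnz: "fps_of_poly q \<noteq> 0" using qnz by (metis fps_of_poly_0 fps_of_poly_eq_iff)
  have q\<phi>: "fps_of_poly q * \<phi> = fps_of_poly p"
  proof -
    have "fps_of_poly q * \<phi> = fps_of_poly p * (inverse (fps_of_poly q) * fps_of_poly q)"
      by (simp add: \<phi>_def taylor_ratfun_def fps_divide_unit[OF q0'] mult_ac)
    also have "inverse (fps_of_poly q) * fps_of_poly q = 1" by (rule inverse_mult_eq_1[OF q0'])
    finally show ?thesis by simp
  qed
  have tWn: "to_fract (W ^ n) \<noteq> 0" for n by simp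
  show ?thesis unfolding \<phi>_def[symmetric]
  proof
    assume inv\<phi>: "\<phi> = \<phi> oo sympl_subst"
    define n where "n = max (degree p) (degree q)"
    obtain RP where RP: "degree RP \<le> n" "fps_of_poly RP = (1 - fps_X) ^ n * (fps_of_poly p oo sympl_subst)"
      using refl[of p n] by (auto simp: n_def)
    obtain RQ where RQ: "degree RQ \<le> n" "fps_of_poly RQ = (1 - fps_X) ^ n * (fps_of_poly q oo sympl_subst)"
      using refl[of q n] by (auto simp: n_def)
    have "(fps_of_poly q oo sympl_subst) * (\<phi> oo sympl_subst) = fps_of_poly p oo sympl_subst"
      using q\<phi> by (metis fps_compose_mult_distrib s0)
    then have "(fps_of_poly q oo sympl_subst) * \<phi> = fps_of_poly p oo sympl_subst"
      using inv\<phi> by simp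
    then have RQ\<phi>: "fps_of_poly RQ * \<phi> = fps_of_poly RP"
      unfolding RP(2) RQ(2) by (simp add: mult_ac)
    have "fps_of_poly (p * RQ) = fps_of_poly (q * RP)"
    proof -
      have "fps_of_poly (p * RQ) = fps_of_poly q * (fps_of_poly RQ * \<phi>)"
        using q\<phi> by (simp add: fps_of_poly_mult mult_ac)
      then show ?thesis using RQ\<phi> by (simp add: fps_of_poly_mult)
    qed
    then have pq: "p * RQ = q * RP" by (simp only: fps_of_poly_eq_iff)
    have invRQ: "(1 - fps_X) ^ n * (fps_of_poly RQ oo sympl_subst) = fps_of_poly q"
      by (rule refl_inv[OF RQ(2)])
    have invRP: "(1 - fps_X) ^ n * (fps_of_poly RP oo sympl_subst) = fps_of_poly p"
      by (rule refl_inv[OF RP(2)])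
    have dD: "degree (q * RQ) \<le> 2 * n"
      using degree_mult_le[of q RQ] RQ(1) by (simp add: n_def)
    have dN: "degree (p * RQ) \<le> 2 * n"
      using degree_mult_le[of p RQ] RQ(1) by (simp add: n_def)
    have iD: "(1 - fps_X) ^ (2 * n) * (fps_of_poly (q * RQ) oo sympl_subst) = fps_of_poly (q * RQ)"
      unfolding fps_of_poly_mult split2 invRQ RQ(2)[symmetric] by (simp add: mult.commute)
    have iN: "(1 - fps_X) ^ (2 * n) * (fps_of_poly (p * RQ) oo sympl_subst) = fps_of_poly (p * RQ)"
      unfolding fps_of_poly_mult split2 invRQ RP(2)[symmetric]
      by (metis fps_of_poly_mult pq mult.commute)
    obtain a where a: "to_fract (p * RQ) = to_fract (W ^ n) * poly_at_ratfun a sympl_y"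
      using inv[OF dN iN] by blast
    obtain b where b: "to_fract (q * RQ) = to_fract (W ^ n) * poly_at_ratfun b sympl_y"
      using inv[OF dD iD] by blast
    have RQnz: "RQ \<noteq> 0"
    proof
      assume "RQ = 0"
      then have "fps_of_poly q = 0" using invRQ by simp
      then show False using fqnz by simp
    qed
    have bnz: "b \<noteq> 0"
    proof
      assume "b = 0"
      then have "to_fract (q * RQ) = 0" using b by simp
      then show False using qnz RQnz by simp
    qed
    have "Fract p q = to_fract (p * RQ) / to_fract (q * RQ)"
      using RQnz qnz by (simp add: Fract_conv_to_fract)
    also have "\<dots> = poly_at_ratfun a sympl_y / poly_at_ratfun b sympl_y"
      unfolding a b using tWn[of n] by simp
    finally show "\<exists>a b. b \<noteq> 0 \<and> Fract p q = poly_at_ratfun a sympl_y / poly_at_ratfun b sympl_y"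
      using bnz by blast
  next
    assume "\<exists>a b. b \<noteq> 0 \<and> Fract p q = poly_at_ratfun a sympl_y / poly_at_ratfun b sympl_y"
    then obtain a b where bnz: "b \<noteq> 0" and eq: "Fract p q = poly_at_ratfun a sympl_y / poly_at_ratfun b sympl_y"
      by blast
    define n where "n = max (degree a) (degree b)"
    obtain A where A: "to_fract A = to_fract (W ^ n) * poly_at_ratfun a sympl_y"
       "(1 - fps_X) ^ (2 * n) * (fps_of_poly A oo sympl_subst) = fps_of_poly A"
      using conv[of a n] by (auto simp: n_def)
    obtain B where B: "to_fract B = to_fract (W ^ n) * poly_at_ratfun b sympl_y" "B = 0 \<longrightarrow> b = 0"
       "(1 - fps_X) ^ (2 * n) * (fps_of_poly B oo sympl_subst) = fps_of_poly B"
      using conv[of b n] by (auto simp: n_def)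
    have Bnz: "B \<noteq> 0" using B(2) bnz by blast
    have fBnz: "fps_of_poly B \<noteq> 0" using Bnz by (metis fps_of_poly_0 fps_of_poly_eq_iff)
    have "to_fract p / to_fract q = to_fract A / to_fract B"
      using eq unfolding A(1) B(1) Fract_conv_to_fract using tWn[of n] by simp
    then have "to_fract p * to_fract B = to_fract A * to_fract q"
      using qnz Bnz frac_eq_eq[of "to_fract q" "to_fract B" "to_fract p" "to_fract A"] by simp
    then have "p * B = A * q" by (simp flip: to_fract_mult)
    then have "fps_of_poly p * fps_of_poly B = fps_of_poly A * fps_of_poly q"
      by (simp flip: fps_of_poly_mult)
    then have "fps_of_poly q * (\<phi> * fps_of_poly B) = fps_of_poly q * fps_of_poly A"
    proof -
      assume h: "fps_of_poly p * fps_of_poly B = fps_of_poly A * fps_of_poly q"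
      have "fps_of_poly q * (\<phi> * fps_of_poly B) = (fps_of_poly q * \<phi>) * fps_of_poly B"
        by (simp only: mult.assoc)
      also have "\<dots> = fps_of_poly A * fps_of_poly q" unfolding q\<phi> h ..
      finally show ?thesis by (simp only: mult.commute)
    qed
    then have \<phi>B: "\<phi> * fps_of_poly B = fps_of_poly A" using fqnz by simp
    have "(\<phi> oo sympl_subst) * fps_of_poly B
        = (1 - fps_X) ^ (2 * n) * ((\<phi> * fps_of_poly B) oo sympl_subst)"
      by (subst (1) B(3)[symmetric]) (simp add: fps_compose_mult_distrib mult_ac)
    also have "\<dots> = \<phi> * fps_of_poly B" unfolding \<phi>B A(2) ..
    finally have "(\<phi> oo sympl_subst) * fps_of_poly B = \<phi> * fps_of_poly B" .
    then show "\<phi> = \<phi> oo sympl_subst" using fBnz by simp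
  qed
qed

theorem theorem1p6:
  shows "(\<forall>\<phi> :: complex fps. symplectic \<phi> \<longleftrightarrow> \<phi> = fps_compose \<phi> sympl_subst)
    \<and> (\<forall>p q :: complex poly. poly q 0 \<noteq> 0 \<longrightarrow>
         (symplectic (taylor_ratfun p q) \<longleftrightarrow>
            (\<exists>a b :: complex poly. b \<noteq> 0 \<and>
               Fract p q = poly_at_ratfun a sympl_y / poly_at_ratfun b sympl_y))
       \<and> (symplectic (taylor_ratfun p q) \<longleftrightarrow>
            taylor_ratfun p q = fps_compose (taylor_ratfun p q) sympl_subst))"
  using part1 part2 by blast


end
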